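(* Under the setting and assumptions in the context, let $\ell\neq z$ be two cluster indices with cluster natural frequencies $\omega_\ell,\omega_z$. Suppose $$|\omega_\ell-\omega_z|>2(m-2)\max_{k\neq\ell,z}\Big\{\sum_{r\in\mathcal P_k}a_{ir},\ \sum_{r\in\mathcal P_k}a_{jr}\Big\}$$ for some (equivalently, by (A3), any) $i\in\mathcal P_\ell$, $j\in\mathcal P_z$. Then there is no solution $\theta(\cdot)$ with $\theta(t)\in\mathcal S_{\mathcal P}$ for all $t\ge0$ along which the phases of clusters $\mathcal P_\ell$ and $\mathcal P_z$ coincide for all $t\ge0$. Consequently, if this inequality holds for every pair of clusters, no submanifold of $\mathcal S_{\mathcal P}$ on which two distinct clusters share the same phase is invariant.
   Context: **Graph and dynamics.** Let $\mathcal G=(\mathcal V,\mathcal E)$ be a connected, undirected, weighted graph with $\mathcal V=\{1,\dots,n\}$ and no self-loops. Its adjacency matrix $A=[a_{ij}]$ is symmetric, with $a_{ij}>0$ if $(i,j)\in\mathcal E$ and $0$ otherwise. The Kuramoto dynamics are $$\dot\theta_i=\omega_i+\sum_{j\neq i}a_{ij}\sin(\theta_j-\theta_i),$$ with $\theta_i\in\mathbb S^1$ and $\omega_i>0$. **Partition and manifold.** Let $\mathcal P=\{\mathcal P_1,\dots,\mathcal P_m\}$, $m>1$, be a partition of $\mathcal V$. The cluster synchronization manifold is $$\mathcal S_{\mathcal P}=\{\theta\in\mathbb T^n:\theta_i=\theta_j\ \text{for all } i,j\in\mathcal P_k,\ k=1,\dots,m\}.$$ **Standing assumptions.** - (A2)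 $\omega_i=\omega_j$ whenever $i,j$ lie in the same cluster; $\omega_k$ denotes the common value on $\mathcal P_k$. - (A3) $\sum_{k\in\mathcal P_\ell}(a_{ik}-a_{jk})=0$ for all $i,j\in\mathcal P_z$ and all $z\neq\ell$. *)

theory Defs
  imports "HOL-Analysis.Analysis"
begin

text \<open>Phases on the circle are represented by real lifts;
  equality on the circle S^1 is equality modulo 2 pi.\<close>

definition circ_eq :: "real \<Rightarrow> real \<Rightarrow> bool" where
  "circ_eq x y \<longleftrightarrow> (\<exists>k::int. x - y = 2 * pi * of_int k)"

definition weighted_graph :: "nat \<Rightarrow> (nat \<Rightarrow> nat \<Rightarrow> real) \<Rightarrow> bool" where
  "weighted_graph n a \<longleftrightarrow>
     (\<forall>i\<in>{1..n}. \<forall>j\<in>{1..n}. a i j = a j i \<and> a i j \<ge> 0) \<and>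
     (\<forall>i\<in>{1..n}. a i i = 0)"

definition graph_connected :: "nat \<Rightarrow> (nat \<Rightarrow> nat \<Rightarrow> real) \<Rightarrow> bool" where
  "graph_connected n a \<longleftrightarrow>
     (\<forall>i\<in>{1..n}. \<forall>j\<in>{1..n}.
        (\<lambda>x y. x \<in> {1..n} \<and> y \<in> {1..n} \<and> a x y > 0)\<^sup>*\<^sup>* i j)"

definition is_partition :: "nat \<Rightarrow> nat \<Rightarrow> (nat \<Rightarrow> nat set) \<Rightarrow> bool" where
  "is_partition n m P \<longleftrightarrow>
     (\<forall>k\<in>{1..m}. P k \<noteq> {} \<and> P k \<subseteq> {1..n}) \<and>
     (\<forall>k\<in>{1..m}. \<forall>k'\<in>{1..m}. k \<noteq> k' \<longrightarrow> P k \<inter> P k' = {}) \<and>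
     (\<Union>k\<in>{1..m}. P k) = {1..n}"

definition assm_A2 :: "nat \<Rightarrow> (nat \<Rightarrow> nat set) \<Rightarrow> (nat \<Rightarrow> real) \<Rightarrow> bool" where
  "assm_A2 m P \<omega> \<longleftrightarrow> (\<forall>k\<in>{1..m}. \<forall>i\<in>P k. \<forall>j\<in>P k. \<omega> i = \<omega> j)"

definition assm_A3 :: "nat \<Rightarrow> (nat \<Rightarrow> nat set) \<Rightarrow> (nat \<Rightarrow> nat \<Rightarrow> real) \<Rightarrow> bool" where
  "assm_A3 m P a \<longleftrightarrow>
     (\<forall>z\<in>{1..m}. \<forall>l\<in>{1..m}. z \<noteq> l \<longrightarrow>
        (\<forall>i\<in>P z. \<forall>j\<in>P z. (\<Sum>k\<in>P l. a i k - a j k) = 0))"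

definition in_SP :: "nat \<Rightarrow> (nat \<Rightarrow> nat set) \<Rightarrow> (nat \<Rightarrow> real) \<Rightarrow> bool" where
  "in_SP m P th \<longleftrightarrow> (\<forall>k\<in>{1..m}. \<forall>i\<in>P k. \<forall>j\<in>P k. circ_eq (th i) (th j))"

definition clusters_coincide :: "(nat \<Rightarrow> nat set) \<Rightarrow> nat \<Rightarrow> nat \<Rightarrow> (nat \<Rightarrow> real) \<Rightarrow> bool" where
  "clusters_coincide P l z th \<longleftrightarrow> (\<forall>i\<in>P l. \<forall>j\<in>P z. circ_eq (th i) (th j))"

definition kuramoto_solution ::
  "nat \<Rightarrow> (nat \<Rightarrow> nat \<Rightarrow> real) \<Rightarrow> (nat \<Rightarrow> real) \<Rightarrow> (real \<Rightarrow> nat \<Rightarrow> real) \<Rightarrow> bool" where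
  "kuramoto_solution n a \<omega> \<theta> \<longleftrightarrow>
     (\<forall>i\<in>{1..n}. \<forall>t\<ge>0.
        ((\<lambda>s. \<theta> s i) has_real_derivative
           (\<omega> i + (\<Sum>j\<in>{1..n} - {i}. a i j * sin (\<theta> t j - \<theta> t i)))) (at t within {0..}))"

definition gap_condition ::
  "nat \<Rightarrow> (nat \<Rightarrow> nat set) \<Rightarrow> (nat \<Rightarrow> nat \<Rightarrow> real) \<Rightarrow> (nat \<Rightarrow> real) \<Rightarrow> nat \<Rightarrow> nat \<Rightarrow> bool" where
  "gap_condition m P a \<omega> l z \<longleftrightarrow>
     (\<exists>i\<in>P l. \<exists>j\<in>P z.
        \<bar>\<omega> i - \<omega> j\<bar> > 2 * (real m - 2) *
          Max ((\<lambda>k. \<Sum>r\<in>P k. a i r) ` ({1..m} - {l, z}) \<union>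
               (\<lambda>k. \<Sum>r\<in>P k. a j r) ` ({1..m} - {l, z})))"

definition kuramoto_invariant ::
  "nat \<Rightarrow> (nat \<Rightarrow> nat \<Rightarrow> real) \<Rightarrow> (nat \<Rightarrow> real) \<Rightarrow> (nat \<Rightarrow> real) set \<Rightarrow> bool" where
  "kuramoto_invariant n a \<omega> M \<longleftrightarrow>
     (\<forall>th0\<in>M. \<exists>\<theta>. kuramoto_solution n a \<omega> \<theta> \<and> \<theta> 0 = th0 \<and> (\<forall>t\<ge>0. \<theta> t \<in> M))"

end

theory Submission
  imports Defs
begin

lemma circ_sin0:
  assumes "circ_eq x y"
  shows "sin (x - y) = 0" "sin (y - x) = 0"
proof -
  obtain k :: int where k: "x - y = 2 * pi * real_of_int k"
    using assms unfolding circ_eq_def by blast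
  have "y - x = 2 * pi * real_of_int (- k)" using k by simp
  then show "sin (y - x) = 0" by simp
  show "sin (x - y) = 0" using k by simp
qed

lemma const_lemma:
  fixes f :: "real \<Rightarrow> real"
  assumes cont: "continuous_on {0..} f"
    and int: "\<And>t. t \<ge> 0 \<Longrightarrow> \<exists>k::int. f t = 2 * pi * real_of_int k"
  shows "f constant_on {0..}"
proof (rule continuous_discrete_range_constant[OF _ cont])
  show "connected {0::real..}" by simp
  fix x :: real assume x: "x \<in> {0..}"
  show "\<exists>e>0. \<forall>y. y \<in> {0..} \<and> f y \<noteq> f x \<longrightarrow> e \<le> norm (f y - f x)"
  proof (intro exI[of _ "2*pi"] conjI allI impI)
    show "0 < 2 * pi" by simp
    fix y assume y: "y \<in> {0..} \<and> f y \<noteq> f x"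
    obtain k1 :: int where k1: "f x = 2 * pi * real_of_int k1" using int x by auto
    obtain k2 :: int where k2: "f y = 2 * pi * real_of_int k2" using int y by auto
    have ne: "k1 \<noteq> k2" using y k1 k2 by auto
    have "1 \<le> \<bar>real_of_int k2 - real_of_int k1\<bar>"
      using ne by (metis of_int_1_le_iff of_int_abs of_int_diff zero_less_abs_iff right_minus_eq int_one_le_iff_zero_less)
    then have "2*pi*1 \<le> 2*pi*\<bar>real_of_int k2 - real_of_int k1\<bar>"
      by (intro mult_left_mono) auto
    also have "\<dots> = norm (f y - f x)"
      using k1 k2 by (simp add: abs_mult right_diff_distrib[symmetric])
    finally show "2 * pi \<le> norm (f y - f x)" by simp
  qed
qed

lemma part1:
  fixes n m :: nat and a :: "nat \<Rightarrow> nat \<Rightarrow> real" and \<omega> :: "nat \<Rightarrow> real"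
    and P :: "nat \<Rightarrow> nat set" and l z :: nat
  assumes graph: "weighted_graph n a"
    and part: "is_partition n m P"
    and lz: "l \<in> {1..m}" "z \<in> {1..m}" "l \<noteq> z"
    and gap: "gap_condition m P a \<omega> l z"
    and sol: "kuramoto_solution n a \<omega> \<theta>"
    and SP: "\<forall>t\<ge>0. in_SP m P (\<theta> t)"
    and co: "\<forall>t\<ge>0. clusters_coincide P l z (\<theta> t)"
  shows False
proof -
  obtain i j where i: "i \<in> P l" and j: "j \<in> P z" and
    g: "\<bar>\<omega> i - \<omega> j\<bar> > 2 * (real m - 2) *
          Max ((\<lambda>k. \<Sum>r\<in>P k. a i r) ` ({1..m} - {l, z}) \<union>
               (\<lambda>k. \<Sum>r\<in>P k. a j r) ` ({1..m} - {l, z}))"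
    using gap unfolding gap_condition_def by blast
  define MX where "MX = Max ((\<lambda>k. \<Sum>r\<in>P k. a i r) ` ({1..m} - {l, z}) \<union>
               (\<lambda>k. \<Sum>r\<in>P k. a j r) ` ({1..m} - {l, z}))"
  have Psub: "\<And>c. c \<in> {1..m} \<Longrightarrow> P c \<subseteq> {1..n}" using part unfolding is_partition_def by blast
  have Pdisj: "\<And>c c'. c \<in> {1..m} \<Longrightarrow> c' \<in> {1..m} \<Longrightarrow> c \<noteq> c' \<Longrightarrow> P c \<inter> P c' = {}"
    using part unfolding is_partition_def by blast
  have Pun: "(\<Union>c\<in>{1..m}. P c) = {1..n}" using part unfolding is_partition_def by blast
  have iV: "i \<in> {1..n}" using i Psub lz by blast
  have jV: "j \<in> {1..n}" using j Psub lz by blast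
  have anonneg: "\<And>u v. u \<in> {1..n} \<Longrightarrow> v \<in> {1..n} \<Longrightarrow> a u v \<ge> 0"
    using graph unfolding weighted_graph_def by blast
  define S where "S = (\<lambda>t u. \<omega> u + (\<Sum>k\<in>{1..n} - {u}. a u k * sin (\<theta> t k - \<theta> t u)))"
  define f where "f = (\<lambda>s. \<theta> s i - \<theta> s j)"
  have der: "\<And>t. t \<ge> 0 \<Longrightarrow> (f has_real_derivative (S t i - S t j)) (at t within {0..})"
    unfolding f_def S_def
    using sol iV jV unfolding kuramoto_solution_def by (auto intro!: derivative_intros)
  have cont: "continuous_on {0..} f"
    by (rule DERIV_continuous_on) (use der in auto)
  have "f constant_on {0..}"
  proof (rule const_lemma[OF cont])
    fix t :: real assume "t \<ge> 0"
    then have "circ_eq (\<theta> t i) (\<theta> t j)" using co i j unfolding clusters_coincide_def by blast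
    then show "\<exists>k::int. f t = 2 * pi * real_of_int k" unfolding f_def circ_eq_def by blast
  qed
  then obtain c where fc: "\<And>t. t \<in> {0..} \<Longrightarrow> f t = c" unfolding constant_on_def by blast
  have d1: "(f has_real_derivative (S 1 i - S 1 j)) (at 1)"
    using der[of 1] at_within_interior[of "1::real" "{0..}"] by simp
  have d2: "(f has_real_derivative 0) (at 1)"
  proof (rule has_field_derivative_transform_within_open[of "\<lambda>_. c" _ _ "{0<..}"])
    show "((\<lambda>_. c) has_field_derivative 0) (at 1)" by simp
  qed (use fc in auto)
  have D0: "S 1 i - S 1 j = 0" using DERIV_unique[OF d1 d2] .
  define x where "x = \<theta> 1"
  have SPx: "in_SP m P x" using SP unfolding x_def by simp
  have cox: "clusters_coincide P l z x" using co unfolding x_def by simp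
  define h where "h = (\<lambda>k. a i k * sin (x k - x i) - a j k * sin (x k - x j))"
  have Si: "(\<Sum>k\<in>{1..n} - {i}. a i k * sin (x k - x i)) = (\<Sum>k\<in>{1..n}. a i k * sin (x k - x i))"
    using iV by (simp add: sum.remove)
  have Sj: "(\<Sum>k\<in>{1..n} - {j}. a j k * sin (x k - x j)) = (\<Sum>k\<in>{1..n}. a j k * sin (x k - x j))"
    using jV by (simp add: sum.remove)
  have diff: "S 1 i - S 1 j = \<omega> i - \<omega> j + (\<Sum>k\<in>{1..n}. h k)"
    unfolding S_def h_def x_def[symmetric] Si Sj by (simp add: sum_subtractf)
  have finP: "\<And>c. c \<in> {1..m} \<Longrightarrow> finite (P c)" using Psub finite_subset by blast
  have decomp: "(\<Sum>k\<in>{1..n}. h k) = (\<Sum>c\<in>{1..m}. \<Sum>k\<in>P c. h k)"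
    unfolding Pun[symmetric]
    by (rule sum.UNION_disjoint) (use finP Pdisj in auto)
  have zero_lz: "(\<Sum>k\<in>P c. h k) = 0" if c: "c = l \<or> c = z" for c
  proof (rule sum.neutral, rule ballI)
    fix k assume k: "k \<in> P c"
    have e1: "circ_eq (x k) (x i) \<or> circ_eq (x i) (x k)"
      using c k i SPx cox lz unfolding in_SP_def clusters_coincide_def by blast
    have e2: "circ_eq (x k) (x j) \<or> circ_eq (x j) (x k)"
      using c k j SPx cox lz unfolding in_SP_def clusters_coincide_def by blast
    have "sin (x k - x i) = 0" using e1 circ_sin0 by blast
    moreover have "sin (x k - x j) = 0" using e2 circ_sin0 by blast
    ultimately show "h k = 0" unfolding h_def by simp
  qed
  define C where "C = {1..m} - {l, z}"
  have split: "(\<Sum>c\<in>{1..m}. \<Sum>k\<in>P c. h k) = (\<Sum>c\<in>C. \<Sum>k\<in>P c. h k)"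
    unfolding C_def by (rule sum.mono_neutral_right) (use zero_lz in auto)
  have finSet: "finite ((\<lambda>k. \<Sum>r\<in>P k. a i r) ` C \<union> (\<lambda>k. \<Sum>r\<in>P k. a j r) ` C)"
    unfolding C_def by simp
  have bnd: "\<bar>\<Sum>k\<in>P c. h k\<bar> \<le> 2 * MX" if c: "c \<in> C" for c
  proof -
    have cm: "c \<in> {1..m}" using c unfolding C_def by auto
    have "\<bar>\<Sum>k\<in>P c. h k\<bar> \<le> (\<Sum>k\<in>P c. \<bar>h k\<bar>)" by (rule sum_abs)
    also have "\<dots> \<le> (\<Sum>k\<in>P c. a i k + a j k)"
    proof (rule sum_mono)
      fix k assume k: "k \<in> P c"
      have kV: "k \<in> {1..n}" using k Psub cm by blast
      have ai: "a i k \<ge> 0" and aj: "a j k \<ge> 0" using anonneg iV jV kV by auto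
      have "\<bar>a i k * sin (x k - x i)\<bar> \<le> a i k"
        using ai abs_sin_le_one[of "x k - x i"] by (simp add: abs_mult mult_left_le)
      moreover have "\<bar>a j k * sin (x k - x j)\<bar> \<le> a j k"
        using aj abs_sin_le_one[of "x k - x j"] by (simp add: abs_mult mult_left_le)
      ultimately show "\<bar>h k\<bar> \<le> a i k + a j k" unfolding h_def by linarith
    qed
    also have "\<dots> = (\<Sum>k\<in>P c. a i k) + (\<Sum>k\<in>P c. a j k)" by (simp add: sum.distrib)
    also have "\<dots> \<le> MX + MX"
    proof (rule add_mono)
      show "(\<Sum>k\<in>P c. a i k) \<le> MX" unfolding MX_def C_def[symmetric]
        by (rule Max_ge[OF finSet]) (use c in auto)
      show "(\<Sum>k\<in>P c. a j k) \<le> MX" unfolding MX_def C_def[symmetric]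
        by (rule Max_ge[OF finSet]) (use c in auto)
    qed
    finally show ?thesis by simp
  qed
  have cardC: "card C = m - 2"
  proof -
    have "card C = card {1..m} - card {l, z}" unfolding C_def
      by (rule card_Diff_subset) (use lz in auto)
    then show ?thesis using lz by simp
  qed
  have m2: "m \<ge> 2" using lz by auto
  have "\<bar>\<Sum>c\<in>C. \<Sum>k\<in>P c. h k\<bar> \<le> (\<Sum>c\<in>C. \<bar>\<Sum>k\<in>P c. h k\<bar>)" by (rule sum_abs)
  also have "\<dots> \<le> (\<Sum>c\<in>C. 2 * MX)" by (rule sum_mono) (use bnd in auto)
  also have "\<dots> = real (m - 2) * (2 * MX)" using cardC by simp
  also have "\<dots> = 2 * (real m - 2) * MX" using m2 by (simp add: of_nat_diff)
  finally have B: "\<bar>\<Sum>c\<in>C. \<Sum>k\<in>P c. h k\<bar> \<le> 2 * (real m - 2) * MX" .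
  have "\<omega> i - \<omega> j = - (\<Sum>c\<in>C. \<Sum>k\<in>P c. h k)"
    using D0 diff decomp split by linarith
  then have "\<bar>\<omega> i - \<omega> j\<bar> \<le> 2 * (real m - 2) * MX" using B by simp
  then show False using g unfolding MX_def by linarith
qed

theorem mainTheorem9:
  fixes n m :: nat and a :: "nat \<Rightarrow> nat \<Rightarrow> real" and \<omega> :: "nat \<Rightarrow> real"
    and P :: "nat \<Rightarrow> nat set" and l z :: nat
  assumes graph: "weighted_graph n a"
    and conn: "graph_connected n a"
    and freq_pos: "\<forall>i\<in>{1..n}. \<omega> i > 0"
    and part: "is_partition n m P"
    and m_gt1: "m > 1"
    and A2: "assm_A2 m P \<omega>"
    and A3: "assm_A3 m P a"
  shows
    "(l \<in> {1..m} \<and> z \<in> {1..m} \<and> l \<noteq> z \<and> gap_condition m P a \<omega> l z \<longrightarrow>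
       \<not> (\<exists>\<theta>. kuramoto_solution n a \<omega> \<theta> \<and>
              (\<forall>t\<ge>0. in_SP m P (\<theta> t)) \<and>
              (\<forall>t\<ge>0. clusters_coincide P l z (\<theta> t))))
     \<and>
     ((\<forall>l'\<in>{1..m}. \<forall>z'\<in>{1..m}. l' \<noteq> z' \<longrightarrow> gap_condition m P a \<omega> l' z') \<longrightarrow>
       (\<forall>l'\<in>{1..m}. \<forall>z'\<in>{1..m}. l' \<noteq> z' \<longrightarrow>
          \<not> kuramoto_invariant n a \<omega> {th. in_SP m P th \<and> clusters_coincide P l' z' th}))"
proof (intro conjI impI ballI notI)
  assume "l \<in> {1..m} \<and> z \<in> {1..m} \<and> l \<noteq> z \<and> gap_condition m P a \<omega> l z"
    and "\<exists>\<theta>. kuramoto_solution n a \<omega> \<theta> \<and> (\<forall>t\<ge>0. in_SP m P (\<theta> t)) \<and>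
              (\<forall>t\<ge>0. clusters_coincide P l z (\<theta> t))"
  then show False using part1[OF graph part] by blast
next
  fix l' z' assume allgap: "\<forall>l'\<in>{1..m}. \<forall>z'\<in>{1..m}. l' \<noteq> z' \<longrightarrow> gap_condition m P a \<omega> l' z'"
    and l': "l' \<in> {1..m}" and z': "z' \<in> {1..m}" and ne: "l' \<noteq> z'"
    and inv: "kuramoto_invariant n a \<omega> {th. in_SP m P th \<and> clusters_coincide P l' z' th}"
  have "(\<lambda>_. 0::real) \<in> {th. in_SP m P th \<and> clusters_coincide P l' z' th}"
    unfolding in_SP_def clusters_coincide_def circ_eq_def by auto
  then obtain \<theta> where "kuramoto_solution n a \<omega> \<theta>" "\<forall>t\<ge>0. \<theta> t \<in> {th. in_SP m P th \<and> clusters_coincide P l' z' th}"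
    using inv unfolding kuramoto_invariant_def by blast
  moreover have "gap_condition m P a \<omega> l' z'" using allgap l' z' ne by blast
  ultimately show False using part1[OF graph part l' z' ne] by blast
qed

end
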